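(* Let $p$ be a prime, $n>1$, $\alpha_0,\dots,\alpha_{n-1}\in\mathbb{L}_p$, and let $$A=\begin{pmatrix}0&1&0&\cdots&0\\0&0&1&\ddots&0\\\vdots&&\ddots&\ddots&0\\0&0&\cdots&0&1\\\alpha_0&\alpha_1&\cdots&\alpha_{n-2}&\alpha_{n-1}\end{pmatrix}\in\mathbb{L}_p^{n\times n}$$ (so that $A^T$ is the companion matrix of $-\alpha_0-\alpha_1t-\dots-\alpha_{n-1}t^{n-1}+t^n$). Let $\mathcal{F}$ be the linear cellular automaton over $(\mathbb{Z}/p\mathbb{Z})^n$ with associated matrix $A$. Then the following are equivalent: $\mathcal{F}$ is positively expansive; $A$ is expansive; $A^T$ is expansive; the polynomial $\alpha_0+\alpha_1t+\dots+\alpha_{n-1}t^{n-1}+t^n$ is expansive.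
   Context: $\mathbb{L}_p=\mathbb{Z}/p\mathbb{Z}[X,X^{-1}]$. The linear cellular automaton over $(\mathbb{Z}/p\mathbb{Z})^n$ with associated matrix $\sum_{j=-r}^rA_jX^{-j}$ ($A_j\in(\mathbb{Z}/p\mathbb{Z})^{n\times n}$) is the map $\mathcal{F}$ with $\mathcal{F}(c)_i=\sum_{j=-r}^rA_jc_{i+j}$ on $((\mathbb{Z}/p\mathbb{Z})^n)^{\mathbb{Z}}$, with metric $d(c,c')=2^{-\min\{|j|:c_j\neq c'_j\}}$ ($d(c,c)=0$); it is positively expansive if there is $\varepsilon>0$ such that for all $c\neq c'$ some $\ell\in\mathbb{N}$ gives $d(\mathcal{F}^\ell(c),\mathcal{F}^\ell(c'))\geq\varepsilon$. For nonzero $\alpha\in\mathbb{L}_p$, $\deg^+(\alpha)$ (resp. $\deg^-(\alpha)$) is the largest (resp. smallest) exponent with nonzero coefficient; $\deg^+(0)=-\infty$, $\deg^-(0)=+\infty$. A monic polynomial $\beta_0+\beta_1t+\dots+\beta_{n-1}t^{n-1}+t^n\in\mathbb{L}_p[t]$ is expansive if $\beta_0\neq0$, $\deg^+(\beta_0)>0$, $\deg^+(\beta_0)>\deg^+(\beta_i)$ for all $1\le i\le n-1$, $\deg^-(\beta_0)<0$ and $\deg^-(\beta_0)<\deg^-(\beta_i)$ for all $1\le i\le n-1$. A matrix $M\in\mathbb{L}_p^{n\times n}$ is expansive if $\det(tI_n-M)$ is expansive. *)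

theory Defs
  imports "Jordan_Normal_Form.Char_Poly" "Berlekamp_Zassenhaus.Finite_Field"
    "HOL-Computational_Algebra.Formal_Laurent_Series" "HOL-Library.Extended_Real"
begin

text \<open>Laurent polynomials over a ring: formal Laurent series with finitely many
  nonzero coefficients. Over Z/pZ this is L_p (take 'a = 'p mod_ring, 'p::prime_card).\<close>
definition is_lpoly :: "'a::zero fls \<Rightarrow> bool" where
  "is_lpoly f \<longleftrightarrow> finite {i. fls_nth f i \<noteq> 0}"

definition deg_plus :: "'a::zero fls \<Rightarrow> ereal" where
  "deg_plus f = (if f = 0 then -\<infinity> else ereal (of_int (Max {i. fls_nth f i \<noteq> 0})))"

definition deg_minus :: "'a::zero fls \<Rightarrow> ereal" where
  "deg_minus f = (if f = 0 then \<infinity> else ereal (of_int (Min {i. fls_nth f i \<noteq> 0})))"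

definition expansive_poly :: "'a::comm_ring_1 fls poly \<Rightarrow> bool" where
  "expansive_poly q \<longleftrightarrow>
     (\<forall>i. is_lpoly (Polynomial.coeff q i)) \<and> monic q \<and>
     Polynomial.coeff q 0 \<noteq> 0 \<and>
     deg_plus (Polynomial.coeff q 0) > 0 \<and>
     (\<forall>i\<in>{1..<degree q}. deg_plus (Polynomial.coeff q 0) > deg_plus (Polynomial.coeff q i)) \<and>
     deg_minus (Polynomial.coeff q 0) < 0 \<and>
     (\<forall>i\<in>{1..<degree q}. deg_minus (Polynomial.coeff q 0) < deg_minus (Polynomial.coeff q i))"

definition expansive_mat :: "'a::comm_ring_1 fls mat \<Rightarrow> bool" where
  "expansive_mat M \<longleftrightarrow> expansive_poly (char_poly M)"

definition configs :: "nat \<Rightarrow> (int \<Rightarrow> 'a vec) set" where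
  "configs n = {c. \<forall>i. dim_vec (c i) = n}"

text \<open>The linear CA with associated matrix M = sum_j A_j X^(-j): A_j has entries
  the coefficients of X^(-j) in the entries of M;  F(c)_i = sum_j A_j c_(i+j).\<close>
definition lin_CA :: "nat \<Rightarrow> 'a::comm_ring_1 fls mat \<Rightarrow> (int \<Rightarrow> 'a vec) \<Rightarrow> (int \<Rightarrow> 'a vec)" where
  "lin_CA n M c = (\<lambda>i. vec n (\<lambda>a.
      \<Sum>j\<in>{j. \<exists>a'<n. \<exists>b<n. fls_nth (M $$ (a', b)) (- j) \<noteq> 0}.
        \<Sum>b<n. fls_nth (M $$ (a, b)) (- j) * (c (i + j) $ b)))"

definition cfg_dist :: "(int \<Rightarrow> 'a) \<Rightarrow> (int \<Rightarrow> 'a) \<Rightarrow> real" where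
  "cfg_dist c c' = (if c = c' then 0
     else 2 powr (- real (LEAST k. \<exists>j. nat \<bar>j\<bar> = k \<and> c j \<noteq> c' j)))"

definition pos_expansive :: "nat \<Rightarrow> ((int \<Rightarrow> 'a vec) \<Rightarrow> (int \<Rightarrow> 'a vec)) \<Rightarrow> bool" where
  "pos_expansive n F \<longleftrightarrow> (\<exists>\<epsilon>>0. \<forall>c\<in>configs n. \<forall>c'\<in>configs n. c \<noteq> c' \<longrightarrow>
      (\<exists>l::nat. cfg_dist ((F ^^ l) c) ((F ^^ l) c') \<ge> \<epsilon>))"

definition comp_like_mat :: "nat \<Rightarrow> (nat \<Rightarrow> 'a::comm_ring_1) \<Rightarrow> 'a mat" where
  "comp_like_mat n \<alpha> = mat n n (\<lambda>(i, j). if i < n - 1 then (if j = i + 1 then 1 else 0) else \<alpha> j)"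

end

theory Submission
  imports Defs
begin


definition cmat :: "nat \<Rightarrow> 'a::comm_ring_1 \<Rightarrow> (nat \<Rightarrow> 'a) \<Rightarrow> 'a mat" where
  "cmat n t \<beta> = mat n n (\<lambda>(i,j). if i < n - 1 then (if j = i then t else if j = i + 1 then -1 else 0)
      else (if j = n - 1 then t - \<beta> j else - \<beta> j))"

lemma prod_list_const_map: "prod_list (map (\<lambda>i. c) xs) = (c::'a::comm_monoid_mult) ^ length xs"
  by (induction xs) auto

lemma det_cmat: "det (cmat (Suc n) t \<beta>) = t ^ Suc n - (\<Sum>i<Suc n. \<beta> i * t ^ i)"
proof (induction n arbitrary: \<beta>)
  case 0
  have "det (cmat 1 t \<beta>) = (\<Sum>i<1. cmat 1 t \<beta> $$ (i,0) * cofactor (cmat 1 t \<beta>) i 0)"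
    by (rule laplace_expansion_column[of _ 1]) (auto simp: cmat_def)
  also have "\<dots> = t - \<beta> 0"
    by (simp add: cmat_def cofactor_def mat_delete_def)
  finally show ?case by simp
next
  case (Suc n)
  define M where "M = cmat (Suc (Suc n)) t \<beta>"
  have M: "M \<in> carrier_mat (Suc (Suc n)) (Suc (Suc n))" by (simp add: M_def cmat_def)
  have "det M = (\<Sum>i<Suc (Suc n). M $$ (i,0) * cofactor M i 0)"
    by (rule laplace_expansion_column[OF M]) auto
  also have "\<dots> = (\<Sum>i\<in>{0, Suc n}. M $$ (i,0) * cofactor M i 0)"
    by (rule sum.mono_neutral_right) (auto simp: M_def cmat_def)
  also have "\<dots> = t * cofactor M 0 0 - \<beta> 0 * cofactor M (Suc n) 0"
    by (simp add: M_def cmat_def)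
  finally have dM: "det M = t * cofactor M 0 0 - \<beta> 0 * cofactor M (Suc n) 0" .
  have d00: "mat_delete M 0 0 = cmat (Suc n) t (\<lambda>i. \<beta> (Suc i))"
    by (rule eq_matI) (auto simp: M_def cmat_def mat_delete_def)
  have dn0: "det (mat_delete M (Suc n) 0) = (-1) ^ Suc n"
  proof -
    have D: "mat_delete M (Suc n) 0 \<in> carrier_mat (Suc n) (Suc n)" using mat_delete_carrier[OF M, of "Suc n" 0] by simp
    have dd: "\<And>i. i \<in> set [0..<Suc n] \<Longrightarrow> mat_delete M (Suc n) 0 $$ (i,i) = -1"
      by (auto simp: M_def cmat_def mat_delete_def)
    have dg: "diag_mat (mat_delete M (Suc n) 0) = map (\<lambda>i. -1) [0..<Suc n]"
      unfolding diag_mat_def using D by (intro map_cong) (auto simp: dd)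
    have "det (mat_delete M (Suc n) 0) = prod_list (diag_mat (mat_delete M (Suc n) 0))"
      by (rule det_lower_triangular[OF _ D]) (auto simp: M_def cmat_def mat_delete_def)
    then show ?thesis unfolding dg by (simp only: prod_list_const_map) simp
  qed
  have "det M = t * det (cmat (Suc n) t (\<lambda>i. \<beta> (Suc i))) - \<beta> 0"
    using dM d00 dn0 by (simp add: cofactor_def)
  also have "\<dots> = t ^ Suc (Suc n) - (\<Sum>i<Suc (Suc n). \<beta> i * t ^ i)"
    unfolding Suc.IH sum.lessThan_Suc_shift[of _ "Suc n"]
    by (simp add: algebra_simps sum_distrib_left)
  finally show ?case by (simp add: M_def)
qed

lemma comp_like_carrier: "comp_like_mat n \<alpha> \<in> carrier_mat n n"
  by (simp add: comp_like_mat_def)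

lemma char_poly_comp_like:
  assumes n: "n > 0"
  shows "char_poly (comp_like_mat n \<alpha>) = Polynomial.monom 1 n - (\<Sum>i<n. Polynomial.monom (\<alpha> i) i)"
proof -
  have "char_poly_matrix (comp_like_mat n \<alpha>) = cmat n [:0,1:] (\<lambda>i. [:\<alpha> i:])"
    by (rule eq_matI) (auto simp: char_poly_matrix_def comp_like_mat_def cmat_def one_pCons)
  then have "char_poly (comp_like_mat n \<alpha>) = det (cmat (Suc (n-1)) [:0,1:] (\<lambda>i. [:\<alpha> i:]))"
    using n by (simp add: char_poly_def)
  also have "\<dots> = [:0,1:] ^ n - (\<Sum>i<n. [:\<alpha> i:] * [:0,1:] ^ i)"
    unfolding det_cmat using n by simp
  also have "\<dots> = Polynomial.monom 1 n - (\<Sum>i<n. Polynomial.monom (\<alpha> i) i)"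
    by (simp add: monom_altdef)
  finally show ?thesis .
qed



definition exp_plus :: "nat \<Rightarrow> (nat \<Rightarrow> int \<Rightarrow> 'a::zero) \<Rightarrow> int \<Rightarrow> bool" where
  "exp_plus n a m \<longleftrightarrow> 0 < m \<and> a 0 m \<noteq> 0 \<and> (\<forall>b<n. \<forall>e. a b e \<noteq> 0 \<longrightarrow> e \<le> m \<and> (b \<noteq> 0 \<longrightarrow> e < m))"

definition exp_minus :: "nat \<Rightarrow> (nat \<Rightarrow> int \<Rightarrow> 'a::zero) \<Rightarrow> int \<Rightarrow> bool" where
  "exp_minus n a L \<longleftrightarrow> L < 0 \<and> a 0 L \<noteq> 0 \<and> (\<forall>b<n. \<forall>e. a b e \<noteq> 0 \<longrightarrow> L \<le> e \<and> (b \<noteq> 0 \<longrightarrow> L < e))"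

lemma exp_plus_cong: "0 < n \<Longrightarrow> (\<And>b e. b < n \<Longrightarrow> (a b e \<noteq> 0) = (a' b e \<noteq> 0)) \<Longrightarrow> exp_plus n a m = exp_plus n a' m"
  unfolding exp_plus_def by metis

lemma exp_minus_cong: "0 < n \<Longrightarrow> (\<And>b e. b < n \<Longrightarrow> (a b e \<noteq> 0) = (a' b e \<noteq> 0)) \<Longrightarrow> exp_minus n a m = exp_minus n a' m"
  unfolding exp_minus_def by metis

lemma dp_eq:
  assumes "is_lpoly f"
  shows "deg_plus f = ereal (real_of_int m) \<longleftrightarrow> (fls_nth f m \<noteq> 0 \<and> (\<forall>e. fls_nth f e \<noteq> 0 \<longrightarrow> e \<le> m))"
proof -
  have fin: "finite {i. fls_nth f i \<noteq> 0}" using assms by (simp add: is_lpoly_def)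
  show ?thesis
  proof (cases "f = 0")
    case True then show ?thesis by (simp add: deg_plus_def)
  next
    case False
    then have ne: "{i. fls_nth f i \<noteq> 0} \<noteq> {}" using fls_nonzero_nth by auto
    have "deg_plus f = ereal (real_of_int m) \<longleftrightarrow> Max {i. fls_nth f i \<noteq> 0} = m"
      using False by (simp add: deg_plus_def)
    also have "\<dots> \<longleftrightarrow> (fls_nth f m \<noteq> 0 \<and> (\<forall>e. fls_nth f e \<noteq> 0 \<longrightarrow> e \<le> m))"
      using fin ne by (auto simp: Max_eq_iff)
    finally show ?thesis .
  qed
qed

lemma dp_less:
  assumes "is_lpoly f"
  shows "deg_plus f < ereal (real_of_int m) \<longleftrightarrow> (\<forall>e. fls_nth f e \<noteq> 0 \<longrightarrow> e < m)"
proof -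
  have fin: "finite {i. fls_nth f i \<noteq> 0}" using assms by (simp add: is_lpoly_def)
  show ?thesis
  proof (cases "f = 0")
    case True then show ?thesis by (simp add: deg_plus_def)
  next
    case False
    then have ne: "{i. fls_nth f i \<noteq> 0} \<noteq> {}" using fls_nonzero_nth by auto
    have "deg_plus f < ereal (real_of_int m) \<longleftrightarrow> Max {i. fls_nth f i \<noteq> 0} < m"
      using False by (simp add: deg_plus_def)
    also have "\<dots> \<longleftrightarrow> (\<forall>e. fls_nth f e \<noteq> 0 \<longrightarrow> e < m)"
      using fin ne by (auto simp: Max_less_iff)
    finally show ?thesis .
  qed
qed

lemma dm_eq:
  assumes "is_lpoly f"
  shows "deg_minus f = ereal (real_of_int m) \<longleftrightarrow> (fls_nth f m \<noteq> 0 \<and> (\<forall>e. fls_nth f e \<noteq> 0 \<longrightarrow> m \<le> e))"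
proof -
  have fin: "finite {i. fls_nth f i \<noteq> 0}" using assms by (simp add: is_lpoly_def)
  show ?thesis
  proof (cases "f = 0")
    case True then show ?thesis by (simp add: deg_minus_def)
  next
    case False
    then have ne: "{i. fls_nth f i \<noteq> 0} \<noteq> {}" using fls_nonzero_nth by auto
    have "deg_minus f = ereal (real_of_int m) \<longleftrightarrow> Min {i. fls_nth f i \<noteq> 0} = m"
      using False by (simp add: deg_minus_def)
    also have "\<dots> \<longleftrightarrow> (fls_nth f m \<noteq> 0 \<and> (\<forall>e. fls_nth f e \<noteq> 0 \<longrightarrow> m \<le> e))"
      using fin ne by (auto simp: Min_eq_iff)
    finally show ?thesis .
  qed
qed

lemma dm_greater:
  assumes "is_lpoly f"
  shows "deg_minus f > ereal (real_of_int m) \<longleftrightarrow> (\<forall>e. fls_nth f e \<noteq> 0 \<longrightarrow> m < e)"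
proof -
  have fin: "finite {i. fls_nth f i \<noteq> 0}" using assms by (simp add: is_lpoly_def)
  show ?thesis
  proof (cases "f = 0")
    case True then show ?thesis by (simp add: deg_minus_def)
  next
    case False
    then have ne: "{i. fls_nth f i \<noteq> 0} \<noteq> {}" using fls_nonzero_nth by auto
    have "deg_minus f > ereal (real_of_int m) \<longleftrightarrow> Min {i. fls_nth f i \<noteq> 0} > m"
      using False by (simp add: deg_minus_def)
    also have "\<dots> \<longleftrightarrow> (\<forall>e. fls_nth f e \<noteq> 0 \<longrightarrow> m < e)"
      using fin ne by (auto simp: Min_gr_iff)
    finally show ?thesis .
  qed
qed

lemma dp_some: "is_lpoly f \<Longrightarrow> f \<noteq> 0 \<Longrightarrow> \<exists>m. deg_plus f = ereal (real_of_int m)"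
  by (simp add: deg_plus_def)

lemma dm_some: "is_lpoly f \<Longrightarrow> f \<noteq> 0 \<Longrightarrow> \<exists>m. deg_minus f = ereal (real_of_int m)"
  by (simp add: deg_minus_def)

lemma poly_char:
  fixes q :: "'a::comm_ring_1 fls poly"
  assumes n: "n > 1" and dq: "degree q = n" and lc: "Polynomial.coeff q n = 1"
    and lp: "\<And>i. i < n \<Longrightarrow> is_lpoly (Polynomial.coeff q i)"
  shows "expansive_poly q \<longleftrightarrow>
     (\<exists>m. exp_plus n (\<lambda>b e. fls_nth (Polynomial.coeff q b) e) m) \<and>
     (\<exists>L. exp_minus n (\<lambda>b e. fls_nth (Polynomial.coeff q b) e) L)"
proof -
  let ?c = "Polynomial.coeff q"
  have lpall: "\<forall>i. is_lpoly (?c i)"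
  proof
    fix i
    show "is_lpoly (?c i)"
    proof (cases "i < n")
      case True then show ?thesis using lp by auto
    next
      case False
      then have "?c i = 0 \<or> ?c i = 1" using lc dq
        by (metis coeff_eq_0 le_neq_implies_less not_less)
      moreover have "finite {j. fls_nth (1::'a fls) j \<noteq> 0}"
        by (rule finite_subset[of _ "{0}"]) auto
      ultimately show ?thesis by (auto simp: is_lpoly_def)
    qed
  qed
  have mon: "monic q" using dq lc by simp
  have l0: "is_lpoly (?c 0)" using lpall by auto
  show ?thesis
  proof
    assume E: "expansive_poly q"
    then have c0: "?c 0 \<noteq> 0" by (simp add: expansive_poly_def)
    obtain m where m: "deg_plus (?c 0) = ereal (real_of_int m)" using dp_some[OF l0 c0] by blast
    obtain L where L: "deg_minus (?c 0) = ereal (real_of_int L)" using dm_some[OF l0 c0] by blast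
    have "exp_plus n (\<lambda>b e. fls_nth (?c b) e) m"
      unfolding exp_plus_def
    proof (intro conjI allI impI)
      show "0 < m" using E m by (simp add: expansive_poly_def)
      show "fls_nth (?c 0) m \<noteq> 0" using m dp_eq[OF l0] by blast
      fix b e assume b: "b < n" and ne: "fls_nth (?c b) e \<noteq> 0"
      show "e \<le> m"
      proof (cases "b = 0")
        case True then show ?thesis using m dp_eq[OF l0] ne by blast
      next
        case False
        then have "deg_plus (?c b) < ereal (real_of_int m)" using E m b dq by (auto simp: expansive_poly_def)
        then show ?thesis using dp_less[of "?c b" m] lpall ne by force
      qed
      show "b \<noteq> 0 \<Longrightarrow> e < m"
      proof -
        assume "b \<noteq> 0"
        then have "deg_plus (?c b) < ereal (real_of_int m)" using E m b dq by (auto simp: expansive_poly_def)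
        then show ?thesis using dp_less[of "?c b" m] lpall ne by force
      qed
    qed
    moreover have "exp_minus n (\<lambda>b e. fls_nth (?c b) e) L"
      unfolding exp_minus_def
    proof (intro conjI allI impI)
      show "L < 0" using E L by (simp add: expansive_poly_def)
      show "fls_nth (?c 0) L \<noteq> 0" using L dm_eq[OF l0] by blast
      fix b e assume b: "b < n" and ne: "fls_nth (?c b) e \<noteq> 0"
      show "L \<le> e"
      proof (cases "b = 0")
        case True then show ?thesis using L dm_eq[OF l0] ne by blast
      next
        case False
        then have "deg_minus (?c b) > ereal (real_of_int L)" using E L b dq by (auto simp: expansive_poly_def)
        then show ?thesis using dm_greater[of "?c b" L] lpall ne by force
      qed
      show "b \<noteq> 0 \<Longrightarrow> L < e"
      proof -
        assume "b \<noteq> 0"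
        then have "deg_minus (?c b) > ereal (real_of_int L)" using E L b dq by (auto simp: expansive_poly_def)
        then show ?thesis using dm_greater[of "?c b" L] lpall ne by force
      qed
    qed
    ultimately show "(\<exists>m. exp_plus n (\<lambda>b e. fls_nth (?c b) e) m) \<and> (\<exists>L. exp_minus n (\<lambda>b e. fls_nth (?c b) e) L)"
      by blast
  next
    assume "(\<exists>m. exp_plus n (\<lambda>b e. fls_nth (?c b) e) m) \<and> (\<exists>L. exp_minus n (\<lambda>b e. fls_nth (?c b) e) L)"
    then obtain m L where P: "exp_plus n (\<lambda>b e. fls_nth (?c b) e) m"
      and M: "exp_minus n (\<lambda>b e. fls_nth (?c b) e) L" by blast
    have n0: "0 < n" using n by simp
    have m: "deg_plus (?c 0) = ereal (real_of_int m)"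
      using P n0 by (auto simp: exp_plus_def dp_eq[OF l0])
    have L: "deg_minus (?c 0) = ereal (real_of_int L)"
      using M n0 by (auto simp: exp_minus_def dm_eq[OF l0])
    have c0: "?c 0 \<noteq> 0" using P fls_nonzeroI by (auto simp: exp_plus_def)
    have A: "\<forall>i\<in>{1..<degree q}. deg_plus (?c 0) > deg_plus (?c i)"
    proof
      fix i assume "i \<in> {1..<degree q}"
      then have "i < n" "i \<noteq> 0" using dq by auto
      then have "\<forall>e. fls_nth (?c i) e \<noteq> 0 \<longrightarrow> e < m" using P by (auto simp: exp_plus_def)
      then show "deg_plus (?c 0) > deg_plus (?c i)" unfolding m using dp_less lpall by blast
    qed
    have B: "\<forall>i\<in>{1..<degree q}. deg_minus (?c 0) < deg_minus (?c i)"
    proof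
      fix i assume "i \<in> {1..<degree q}"
      then have "i < n" "i \<noteq> 0" using dq by auto
      then have "\<forall>e. fls_nth (?c i) e \<noteq> 0 \<longrightarrow> L < e" using M by (auto simp: exp_minus_def)
      then show "deg_minus (?c 0) < deg_minus (?c i)" unfolding L using dm_greater lpall by blast
    qed
    show "expansive_poly q" unfolding expansive_poly_def
      using lpall mon c0 A B m L P M by (auto simp: exp_plus_def exp_minus_def)
  qed
qed



definition rec_ok :: "nat \<Rightarrow> (nat \<Rightarrow> int \<Rightarrow> 'a::comm_ring_1) \<Rightarrow> int set \<Rightarrow> (nat \<Rightarrow> int \<Rightarrow> 'a) \<Rightarrow> bool" where
  "rec_ok n a E w \<longleftrightarrow> (\<forall>k i. w (k+n) i = (\<Sum>b<n. \<Sum>e\<in>E. a b e * w (k+b) (i - e)))"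

lemma double_sum_single:
  fixes f :: "nat \<Rightarrow> int \<Rightarrow> 'a::comm_ring_1"
  assumes "finite E" "b0 < n" "e0 \<in> E" "\<And>b e. b < n \<Longrightarrow> e \<in> E \<Longrightarrow> (b, e) \<noteq> (b0, e0) \<Longrightarrow> f b e = 0"
  shows "(\<Sum>b<n. \<Sum>e\<in>E. f b e) = f b0 e0"
proof -
  have "(\<Sum>b<n. \<Sum>e\<in>E. f b e) = (\<Sum>b<n. if b = b0 then f b0 e0 else 0)"
  proof (rule sum.cong[OF refl])
    fix b assume b: "b \<in> {..<n}"
    have "(\<Sum>e\<in>E. f b e) = (\<Sum>e\<in>E. if e = e0 then (if b = b0 then f b0 e0 else 0) else 0)"
      using assms(4) b by (intro sum.cong) auto
    also have "\<dots> = (if b = b0 then f b0 e0 else 0)" using assms(1,3) by simp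
    finally show "(\<Sum>e\<in>E. f b e) = (if b = b0 then f b0 e0 else 0)" .
  qed
  also have "\<dots> = f b0 e0" using assms(2) by simp
  finally show ?thesis .
qed

lemma prop_left:
  fixes a :: "nat \<Rightarrow> int \<Rightarrow> 'a::field"
  assumes n: "n > 0" and fin: "finite E" and supp: "\<And>b e. b < n \<Longrightarrow> a b e \<noteq> 0 \<Longrightarrow> e \<in> E"
    and m: "m > 0" "a 0 m \<noteq> 0"
    and hi: "\<And>b e. b < n \<Longrightarrow> a b e \<noteq> 0 \<Longrightarrow> e \<le> m \<and> (b \<noteq> 0 \<longrightarrow> e < m)"
    and L: "L \<le> 0" and lo: "\<And>b e. b < n \<Longrightarrow> a b e \<noteq> 0 \<Longrightarrow> L \<le> e"
    and rec: "rec_ok n a E w"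
    and win: "\<And>k i. t0 < i \<Longrightarrow> i \<le> t0 + m - L \<Longrightarrow> w k i = 0"
  shows "\<forall>k i. i \<le> t0 + m - L \<longrightarrow> w k i = 0"
proof -
  have main: "\<forall>k i. t0 - int d < i \<and> i \<le> t0 + m - L \<longrightarrow> w k i = 0" for d
  proof (induction d)
    case 0 then show ?case using win by auto
  next
    case (Suc d)
    show ?case
    proof (intro allI impI)
      fix k i assume ki: "t0 - int (Suc d) < i \<and> i \<le> t0 + m - L"
      show "w k i = 0"
      proof (cases "t0 - int d < i")
        case True then show ?thesis using Suc ki by auto
      next
        case False
        then have i: "i = t0 - int d" using ki by auto
        have "w (k+n) (i+m) = (\<Sum>b<n. \<Sum>e\<in>E. a b e * w (k+b) (i + m - e))"
          using rec by (simp add: rec_ok_def)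
        also have "\<dots> = a 0 m * w (k+0) (i + m - m)"
        proof (rule double_sum_single[OF fin n])
          show "m \<in> E" using supp n m by auto
          fix b e assume b: "b < n" and e: "e \<in> E" and be: "(b, e) \<noteq> (0, m)"
          show "a b e * w (k + b) (i + m - e) = 0"
          proof (cases "a b e = 0")
            case False
            then have "e < m" using hi[OF b] be by fastforce
            moreover have "L \<le> e" using lo[OF b False] .
            ultimately have "w (k + b) (i + m - e) = 0" using Suc i L by auto
            then show ?thesis by simp
          qed simp
        qed
        finally have "a 0 m * w k i = w (k+n) (i+m)" by simp
        also have "\<dots> = 0" using Suc i L m by auto
        finally show ?thesis using m by simp
      qed
    qed
  qed
  show ?thesis
  proof (intro allI impI)
    fix k i assume "i \<le> t0 + m - L"
    then show "w k i = 0" using main[of "nat (t0 - i + 1)"] by auto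
  qed
qed

definition reflc :: "(nat \<Rightarrow> int \<Rightarrow> 'a) \<Rightarrow> nat \<Rightarrow> int \<Rightarrow> 'a" where
  "reflc a b e = a b (- e)"

lemma rec_ok_refl:
  assumes "rec_ok n a E w"
  shows "rec_ok n (reflc a) (uminus ` E) (reflc w)"
  unfolding rec_ok_def
proof (intro allI)
  fix k i
  have "reflc w (k+n) i = (\<Sum>b<n. \<Sum>e\<in>E. a b e * w (k+b) (- i - e))"
    using assms by (simp add: rec_ok_def reflc_def)
  also have "\<dots> = (\<Sum>b<n. \<Sum>e\<in>uminus ` E. reflc a b e * reflc w (k + b) (i - e))"
    by (rule sum.cong[OF refl]) (simp add: sum.reindex inj_on_def reflc_def, rule sum.cong, auto simp: diff_diff_eq add.commute intro!: arg_cong[where f="\<lambda>x. _ * w _ x"])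
  finally show "reflc w (k+n) i = (\<Sum>b<n. \<Sum>e\<in>uminus ` E. reflc a b e * reflc w (k + b) (i - e))" .
qed

lemma propagate:
  fixes a :: "nat \<Rightarrow> int \<Rightarrow> 'a::field"
  assumes n: "n > 0" and fin: "finite E" and supp: "\<And>b e. b < n \<Longrightarrow> a b e \<noteq> 0 \<Longrightarrow> e \<in> E"
    and P: "exp_plus n a m" and M: "exp_minus n a L"
  shows "\<exists>R::nat. \<forall>w. rec_ok n a E w \<and> (\<forall>k i. \<bar>i\<bar> \<le> int R \<longrightarrow> w k i = 0) \<longrightarrow> (\<forall>k i. w k i = 0)"
proof -
  have m: "m > 0" "a 0 m \<noteq> 0" and hi: "\<And>b e. b < n \<Longrightarrow> a b e \<noteq> 0 \<Longrightarrow> e \<le> m \<and> (b \<noteq> 0 \<longrightarrow> e < m)"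
    using P by (auto simp: exp_plus_def)
  have L: "L < 0" "a 0 L \<noteq> 0" and lo: "\<And>b e. b < n \<Longrightarrow> a b e \<noteq> 0 \<Longrightarrow> L \<le> e \<and> (b \<noteq> 0 \<longrightarrow> L < e)"
    using M by (auto simp: exp_minus_def)
  define R where "R = nat (m - L)"
  have R: "int R = m - L" using m L by (simp add: R_def)
  show ?thesis
  proof (rule exI[of _ R], rule allI, rule impI)
    fix w assume asm: "rec_ok n a E w \<and> (\<forall>k i. \<bar>i\<bar> \<le> int R \<longrightarrow> w k i = 0)"
    then have rec: "rec_ok n a E w" and win: "\<And>k i. \<bar>i\<bar> \<le> int R \<Longrightarrow> w k i = 0" by auto
    have left: "\<forall>k i. i \<le> (- int R - 1) + m - L \<longrightarrow> w k i = 0"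
      by (rule prop_left[OF n fin supp m hi _ _ rec]) (use L lo win R in auto)
    have rec': "rec_ok n (reflc a) (uminus ` E) (reflc w)" using rec_ok_refl[OF rec] .
    have right: "\<forall>k i. i \<le> (- int R - 1) + (- L) - (- m) \<longrightarrow> reflc w k i = 0"
    proof (rule prop_left[OF n _ _ _ _ _ _ _ rec'])
      show "finite (uminus ` E)" using fin by simp
      show "\<And>b e. b < n \<Longrightarrow> reflc a b e \<noteq> 0 \<Longrightarrow> e \<in> uminus ` E"
        using supp unfolding reflc_def by (metis image_eqI minus_minus)
      show "0 < - L" using L by simp
      show "reflc a 0 (- L) \<noteq> 0" using L by (simp add: reflc_def)
      show "\<And>b e. b < n \<Longrightarrow> reflc a b e \<noteq> 0 \<Longrightarrow> e \<le> - L \<and> (b \<noteq> 0 \<longrightarrow> e < - L)"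
        using lo unfolding reflc_def by fastforce
      show "- m \<le> 0" using m by simp
      show "\<And>b e. b < n \<Longrightarrow> reflc a b e \<noteq> 0 \<Longrightarrow> - m \<le> e"
        using hi unfolding reflc_def by fastforce
      show "\<And>k i. - int R - 1 < i \<Longrightarrow> i \<le> - int R - 1 + - L - - m \<Longrightarrow> reflc w k i = 0"
        using win R unfolding reflc_def by auto
    qed
    show "\<forall>k i. w k i = 0"
    proof (intro allI)
      fix k i
      show "w k i = 0"
      proof (cases "i \<le> -1")
        case True then show ?thesis using left R by auto
      next
        case False
        show ?thesis
        proof (cases "i = 0")
          case True then show ?thesis using win by simp
        next
          case False
        then have "- i \<le> - int R - 1 + - L - - m" using R \<open>\<not> i \<le> -1\<close> by auto
        then have "reflc w k (- i) = 0" using right by blast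
        then show ?thesis by (simp add: reflc_def)
        qed
      qed
    qed
  qed
qed



function cu :: "(nat \<Rightarrow> int \<Rightarrow> 'a::field) \<Rightarrow> nat \<Rightarrow> int set \<Rightarrow> nat \<Rightarrow> int \<Rightarrow> nat \<Rightarrow> nat \<Rightarrow> 'a" where
  "cu c n E j \<mu> i k = (if k < j then (if i = 0 \<and> k = 0 then 1 else 0) else
    - (\<Sum>b\<in>{..n}. \<Sum>e\<in>E. if (b \<noteq> j \<or> e \<noteq> \<mu>) \<and> \<mu> \<le> e \<and> (j < b \<longrightarrow> \<mu> < e) \<and> e \<le> int i + \<mu>
        then c b e * cu c n E j \<mu> (nat (int i + \<mu> - e)) (k - j + b) else 0) / c j \<mu>)"
  by pat_completeness auto
termination
  by (relation "inv_image (less_than <*lex*> less_than) (\<lambda>(c,n,E,j,\<mu>,i,k). (i,k))") auto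

declare cu.simps[simp del]

lemma construct:
  fixes a :: "nat \<Rightarrow> int \<Rightarrow> 'a::field"
  assumes n: "n > 0" and fin: "finite E" and z: "0 \<in> E"
    and supp: "\<And>b e. b < n \<Longrightarrow> a b e \<noteq> 0 \<Longrightarrow> e \<in> E"
    and nm: "\<not> (\<exists>L. exp_minus n a L)"
  shows "\<exists>U. U 0 0 \<noteq> 0 \<and> (\<forall>k i. i < 0 \<longrightarrow> U k i = 0) \<and> rec_ok n a E U"
proof -
  define a' where "a' b e = (if b < n then a b e else if b = n \<and> e = 0 then -1 else 0)" for b e
  define Z where "Z = {(b,e). b \<le> n \<and> e \<in> E \<and> a' b e \<noteq> 0}"
  have finZ: "finite Z"
    by (rule finite_subset[of _ "{..n} \<times> E"]) (auto simp: Z_def fin)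
  have nZ: "(n, 0) \<in> Z" using z by (simp add: Z_def a'_def)
  have supp': "e \<in> E" if "b \<le> n" "a' b e \<noteq> 0" for b e
    using that supp z by (cases "b < n") (auto simp: a'_def split: if_splits)
  define \<mu> where "\<mu> = Min (snd ` Z)"
  have \<mu>_le: "\<mu> \<le> e" if "b \<le> n" "a' b e \<noteq> 0" for b e
  proof -
    have "(b, e) \<in> Z" using that supp' by (simp add: Z_def)
    then show ?thesis unfolding \<mu>_def using finZ by (auto intro!: Min_le simp: image_iff) (metis snd_conv)
  qed
  have "\<mu> \<in> snd ` Z" unfolding \<mu>_def using finZ nZ by (intro Min_in) auto
  then obtain b0 where b0: "b0 \<le> n" "a' b0 \<mu> \<noteq> 0" by (auto simp: Z_def)
  define B where "B = {b. b \<le> n \<and> a' b \<mu> \<noteq> 0}"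
  have finB: "finite B" by (rule finite_subset[of _ "{..n}"]) (auto simp: B_def)
  define j where "j = Max B"
  have jB: "j \<in> B" unfolding j_def using finB b0 by (intro Max_in) (auto simp: B_def)
  then have jn: "j \<le> n" and aj: "a' j \<mu> \<noteq> 0" by (auto simp: B_def)
  have j_max: "b \<le> j" if "b \<le> n" "a' b \<mu> \<noteq> 0" for b
    unfolding j_def using finB that by (intro Max_ge) (auto simp: B_def)
  have \<mu>0: "\<mu> \<le> 0" using \<mu>_le[of n 0] by (simp add: a'_def)
  have jpos: "j > 0"
  proof (rule ccontr)
    assume "\<not> j > 0"
    then have j0: "j = 0" by simp
    have "\<mu> \<noteq> 0"
    proof
      assume "\<mu> = 0"
      then have "n \<le> j" using j_max[of n] by (simp add: a'_def)
      then show False using j0 n by simp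
    qed
    then have "\<mu> < 0" using \<mu>0 by simp
    moreover have "a 0 \<mu> \<noteq> 0" using aj j0 n by (simp add: a'_def)
    moreover have "L \<le> e \<and> (b \<noteq> 0 \<longrightarrow> L < e)" if "b < n" "a b e \<noteq> 0" "L = \<mu>" for b e L
    proof -
      have ne: "a' b e \<noteq> 0" using that by (simp add: a'_def)
      have "\<mu> \<le> e" using \<mu>_le[OF _ ne] that by simp
      moreover have "b \<noteq> 0 \<longrightarrow> \<mu> < e"
        using j_max[of b] ne that j0 \<open>\<mu> \<le> e\<close> by (metis le_less le_zero_eq less_imp_le)
      ultimately show ?thesis using that by simp
    qed
    ultimately have "exp_minus n a \<mu>" by (auto simp: exp_minus_def)
    then show False using nm by blast
  qed
  define U where "U k i = (if i < 0 then 0 else cu a' n E j \<mu> (nat i) k)" for k i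
  have U00: "U 0 0 = 1" using jpos by (simp add: U_def cu.simps)
  have full: "(\<Sum>b<Suc n. \<Sum>e\<in>E. a' b e * U (k+b) (i - e)) = 0" for k i
  proof (cases "i - \<mu> < 0")
    case True
    have "a' b e * U (k+b) (i - e) = 0" if "b < Suc n" for b e
      using \<mu>_le[of b e] that True by (cases "a' b e = 0") (auto simp: U_def)
    then show ?thesis by (intro sum.neutral ballI) auto
  next
    case False
    define T where "T b e = a' b e * U (k+b) (i - e)" for b e
    define G where "G = (\<Sum>b\<in>{..n}. \<Sum>e\<in>E. if (b \<noteq> j \<or> e \<noteq> \<mu>) \<and> \<mu> \<le> e \<and> (j < b \<longrightarrow> \<mu> < e) \<and> e \<le> int (nat (i - \<mu>)) + \<mu>
        then a' b e * cu a' n E j \<mu> (nat (int (nat (i - \<mu>)) + \<mu> - e)) (k + j - j + b) else 0)"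
    have Uj: "U (k+j) (i - \<mu>) = - G / a' j \<mu>"
      using False by (simp add: U_def G_def cu.simps[of a' n E j \<mu> "nat (i - \<mu>)" "k+j"])
    have G: "G = (\<Sum>b<Suc n. \<Sum>e\<in>E. if b \<noteq> j \<or> e \<noteq> \<mu> then T b e else 0)"
      unfolding G_def lessThan_Suc_atMost
    proof (intro sum.cong refl)
      fix b e assume b: "b \<in> {..n}" and e: "e \<in> E"
      show "(if (b \<noteq> j \<or> e \<noteq> \<mu>) \<and> \<mu> \<le> e \<and> (j < b \<longrightarrow> \<mu> < e) \<and> e \<le> int (nat (i - \<mu>)) + \<mu>
        then a' b e * cu a' n E j \<mu> (nat (int (nat (i - \<mu>)) + \<mu> - e)) (k + j - j + b) else 0) =
        (if b \<noteq> j \<or> e \<noteq> \<mu> then T b e else 0)"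
      proof (cases "a' b e = 0")
        case True then show ?thesis by (simp add: T_def)
      next
        case ne: False
        show ?thesis
        proof (cases "b \<noteq> j \<or> e \<noteq> \<mu>")
          case bj: True
          have le: "\<mu> \<le> e" using \<mu>_le[OF _ ne] b by simp
          have lt: "j < b \<longrightarrow> \<mu> < e" using j_max[of b] ne b le by (metis atMost_iff le_less not_le)
          show ?thesis using bj le lt False by (auto simp: T_def U_def)
        qed (auto simp: T_def)
      qed
    qed
    have "(\<Sum>b<Suc n. \<Sum>e\<in>E. T b e) = (\<Sum>b<Suc n. \<Sum>e\<in>E. (if b \<noteq> j \<or> e \<noteq> \<mu> then T b e else 0) + (if b \<noteq> j \<or> e \<noteq> \<mu> then 0 else T b e))"
      by (intro sum.cong refl) simp
    also have "\<dots> = G + (\<Sum>b<Suc n. \<Sum>e\<in>E. (if b \<noteq> j \<or> e \<noteq> \<mu> then 0 else T b e))"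
      unfolding G by (simp add: sum.distrib)
    also have "(\<Sum>b<Suc n. \<Sum>e\<in>E. (if b \<noteq> j \<or> e \<noteq> \<mu> then 0 else T b e)) = T j \<mu>"
      using double_sum_single[OF fin, of j "Suc n" \<mu> "\<lambda>b e. if b \<noteq> j \<or> e \<noteq> \<mu> then 0 else T b e"]
        jn supp'[OF jn aj] by simp
    also have "T j \<mu> = - G" unfolding T_def Uj using aj by (simp add: add.commute)
    finally show ?thesis unfolding T_def by simp
  qed
  have rec: "rec_ok n a E U"
    unfolding rec_ok_def
  proof (intro allI)
    fix k i
    have "0 = (\<Sum>b<Suc n. \<Sum>e\<in>E. a' b e * U (k+b) (i - e))" using full by simp
    also have "\<dots> = (\<Sum>b<n. \<Sum>e\<in>E. a b e * U (k+b) (i - e)) + (\<Sum>e\<in>E. a' n e * U (k+n) (i - e))"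
      by (simp add: a'_def)
    also have "(\<Sum>e\<in>E. a' n e * U (k+n) (i - e)) = (\<Sum>e\<in>E. if e = 0 then - U (k+n) i else 0)"
      by (intro sum.cong refl) (simp add: a'_def)
    also have "\<dots> = - U (k+n) i" using fin z by simp
    finally show "U (k+n) i = (\<Sum>b<n. \<Sum>e\<in>E. a b e * U (k+b) (i - e))"
      by (simp add: eq_neg_iff_add_eq_0 add.commute)
  qed
  show ?thesis using U00 rec by (intro exI[of _ U]) (auto simp: U_def)
qed



lemma construct_plus:
  fixes a :: "nat \<Rightarrow> int \<Rightarrow> 'a::field"
  assumes n: "n > 0" and fin: "finite E" and z: "0 \<in> E"
    and supp: "\<And>b e. b < n \<Longrightarrow> a b e \<noteq> 0 \<Longrightarrow> e \<in> E"
    and np: "\<not> (\<exists>m. exp_plus n a m)"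
  shows "\<exists>U. U 0 0 \<noteq> 0 \<and> (\<forall>k i. i > 0 \<longrightarrow> U k i = 0) \<and> rec_ok n a E U"
proof -
  have "\<not> (\<exists>L. exp_minus n (reflc a) L)"
  proof
    assume "\<exists>L. exp_minus n (reflc a) L"
    then obtain L where "exp_minus n (reflc a) L" by blast
    then have "exp_plus n a (- L)" unfolding exp_minus_def exp_plus_def reflc_def
      by (metis add.inverse_inverse neg_0_less_iff_less neg_le_iff_le neg_less_iff_less)
    then show False using np by blast
  qed
  moreover have "\<And>b e. b < n \<Longrightarrow> reflc a b e \<noteq> 0 \<Longrightarrow> e \<in> uminus ` E"
    using supp unfolding reflc_def by (metis image_eqI minus_minus)
  ultimately obtain U where U: "U 0 0 \<noteq> 0" "\<forall>k i. i < 0 \<longrightarrow> U k i = 0" "rec_ok n (reflc a) (uminus ` E) U"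
    using construct[OF n, of "uminus ` E" "reflc a"] fin z by auto
  have "rec_ok n (reflc (reflc a)) (uminus ` uminus ` E) (reflc U)" using rec_ok_refl[OF U(3)] .
  moreover have "reflc (reflc a) = a" by (simp add: reflc_def fun_eq_iff)
  moreover have "uminus ` uminus ` E = E" by (simp add: image_image)
  ultimately have "rec_ok n a E (reflc U)" by simp
  then show ?thesis using U(1,2) by (intro exI[of _ "reflc U"]) (auto simp: reflc_def)
qed

lemma rec_ok_shift:
  fixes U :: "nat \<Rightarrow> int \<Rightarrow> 'a::comm_ring_1" and s :: int and E :: "int set"
  assumes "rec_ok n a E U" shows "rec_ok n a E (\<lambda>k i. U k (i - s))"
proof -
  have H: "\<forall>k i. U (k + n) i = (\<Sum>b<n. \<Sum>e\<in>E. a b e * U (k + b) (i - e))"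
    using assms by (simp add: rec_ok_def)
  show ?thesis unfolding rec_ok_def
  proof (intro allI)
    fix k and i :: int
    have "U (k + n) (i - s) = (\<Sum>b<n. \<Sum>e\<in>E. a b e * U (k + b) (i - s - e))" using H by blast
    also have "\<dots> = (\<Sum>b<n. \<Sum>e\<in>E. a b e * U (k + b) (i - e - s))"
    proof -
      have sw: "\<And>e::int. i - s - e = i - e - s" by linarith
      show ?thesis by (simp only: sw)
    qed
    finally show "U (k + n) (i - s) = (\<Sum>b<n. \<Sum>e\<in>E. a b e * U (k + b) (i - e - s))" .
  qed
qed

lemma dist_small_eq:
  assumes "cfg_dist d d' < 2 powr - real R" "\<bar>j\<bar> \<le> int R"
  shows "d j = d' j"
proof (rule ccontr)
  assume ne: "d j \<noteq> d' j"
  then have dd: "d \<noteq> d'" by auto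
  define k where "k = (LEAST k. \<exists>j. nat \<bar>j\<bar> = k \<and> d j \<noteq> d' j)"
  have D: "cfg_dist d d' = 2 powr - real k" unfolding k_def by (simp only: cfg_dist_def if_not_P[OF dd])
  have "k \<le> nat \<bar>j\<bar>" unfolding k_def using ne by (intro Least_le) auto
  then have "k \<le> R" using assms(2) by linarith
  then have "2 powr - real R \<le> 2 powr - real k" by (intro powr_mono) auto
  then show False using assms(1) D by linarith
qed

lemma dist_le_of_eq:
  assumes "\<And>j. \<bar>j\<bar> \<le> int R \<Longrightarrow> d j = d' j"
  shows "cfg_dist d d' \<le> 2 powr - real (Suc R)"
proof (cases "d = d'")
  case True then show ?thesis unfolding cfg_dist_def by simp
next
  case False
  then obtain j0 where j0: "d j0 \<noteq> d' j0" by auto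
  define P where "P = (\<lambda>k. \<exists>j. nat \<bar>j\<bar> = k \<and> d j \<noteq> d' j)"
  define k where "k = (LEAST k. P k)"
  have D0: "cfg_dist d d' = 2 powr - real (LEAST k. \<exists>j. nat \<bar>j\<bar> = k \<and> d j \<noteq> d' j)"
    by (simp only: cfg_dist_def if_not_P[OF False])
  have D: "cfg_dist d d' = 2 powr - real k" using D0 unfolding k_def P_def .
  have P0: "P (nat \<bar>j0\<bar>)" unfolding P_def using j0 by blast
  have "P k" unfolding k_def by (rule LeastI[of P, OF P0])
  then obtain j where j: "nat \<bar>j\<bar> = k" "d j \<noteq> d' j" unfolding P_def by blast
  have "\<not> \<bar>j\<bar> \<le> int R" using assms j(2) by blast
  then have "\<bar>j\<bar> > int R" by simp
  then have "Suc R \<le> k" using j(1) by linarith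
  then have "2 powr - real k \<le> 2 powr - real (Suc R)" by (intro powr_mono) auto
  then show ?thesis using D by linarith
qed

locale CAsetup =
  fixes n :: nat and \<alpha> :: "nat \<Rightarrow> 'a::field fls"
  assumes n: "n > 1" and lp: "\<forall>i<n. is_lpoly (\<alpha> i)"
begin

definition "Am = comp_like_mat n \<alpha>"
definition "J = {j. \<exists>a'<n. \<exists>b<n. fls_nth (index_mat Am (a', b)) (- j) \<noteq> 0}"
definition "E = uminus ` J"
definition "ca b e = fls_nth (\<alpha> b) e"
definition "Fm = lin_CA n Am"

lemma A_entry: "a' < n \<Longrightarrow> b < n \<Longrightarrow> index_mat Am (a', b) = (if a' < n - 1 then (if b = a' + 1 then 1 else 0) else \<alpha> b)"
  by (simp add: Am_def comp_like_mat_def)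

lemma finJ: "finite J"
proof -
  have "J \<subseteq> {0} \<union> (\<Union>b<n. uminus ` {e. fls_nth (\<alpha> b) e \<noteq> 0})"
  proof
    fix j assume "j \<in> J"
    then obtain a' b where ab: "a' < n" "b < n" "fls_nth (index_mat Am (a', b)) (- j) \<noteq> 0" by (auto simp: J_def)
    show "j \<in> {0} \<union> (\<Union>b<n. uminus ` {e. fls_nth (\<alpha> b) e \<noteq> 0})"
    proof (cases "a' < n - 1")
      case True then show ?thesis using ab by (auto simp: A_entry split: if_splits)
    next
      case False
      then have "fls_nth (\<alpha> b) (-j) \<noteq> 0" using ab by (simp add: A_entry)
      then have "j \<in> uminus ` {e. fls_nth (\<alpha> b) e \<noteq> 0}" by (metis (mono_tags) image_eqI mem_Collect_eq minus_minus)
      then show ?thesis using ab(2) by blast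
    qed
  qed
  moreover have "finite ({0} \<union> (\<Union>b<n. uminus ` {e. fls_nth (\<alpha> b) e \<noteq> 0}))"
    using lp by (intro finite_UnI finite_UN_I finite_imageI) (auto simp: is_lpoly_def)
  ultimately show ?thesis by (rule finite_subset)
qed

lemma finE: "finite E" using finJ by (simp add: E_def)

lemma zJ: "0 \<in> J"
proof -
  have "fls_nth (index_mat Am (0, 1)) (- 0) \<noteq> 0" using n by (simp add: A_entry)
  then show ?thesis using n unfolding J_def by (intro CollectI exI[of _ 0] exI[of _ 1]) auto
qed

lemma zE: "0 \<in> E" using zJ unfolding E_def by (metis image_eqI minus_zero)

lemma suppE: "b < n \<Longrightarrow> ca b e \<noteq> 0 \<Longrightarrow> e \<in> E"
proof -
  assume b: "b < n" and ne: "ca b e \<noteq> 0"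
  have "fls_nth (index_mat Am (n - 1, b)) (- (- e)) \<noteq> 0" using b ne n by (simp add: A_entry ca_def)
  then have "- e \<in> J" unfolding J_def using b n by (intro CollectI exI[of _ "n-1"] exI[of _ b]) auto
  then show "e \<in> E" unfolding E_def by (metis image_eqI minus_minus)
qed

lemma F_entry:
  assumes r: "r < n"
  shows "vec_index (Fm c i) r = (if r < n - 1 then vec_index (c i) (r+1) else (\<Sum>b<n. \<Sum>e\<in>E. ca b e * vec_index (c (i - e)) b))"
proof -
  have Fm: "vec_index (Fm c i) r = (\<Sum>j\<in>J. \<Sum>b<n. fls_nth (index_mat Am (r, b)) (- j) * (vec_index (c (i + j)) b))"
    using r by (simp add: Fm_def lin_CA_def J_def)
  show ?thesis
  proof (cases "r < n - 1")
    case True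
    have "(\<Sum>j\<in>J. \<Sum>b<n. fls_nth (index_mat Am (r, b)) (- j) * (vec_index (c (i + j)) b)) = (\<Sum>j\<in>J. if j = 0 then vec_index (c i) (r+1) else 0)"
    proof (rule sum.cong[OF refl])
      fix j assume "j \<in> J"
      have "(\<Sum>b<n. fls_nth (index_mat Am (r, b)) (- j) * (vec_index (c (i + j)) b)) = (\<Sum>b<n. if b = r + 1 then (if j = 0 then vec_index (c i) (r+1) else 0) else 0)"
        using r True by (intro sum.cong refl) (auto simp: A_entry)
      also have "\<dots> = (if j = 0 then vec_index (c i) (r+1) else 0)" using True by simp
      finally show "(\<Sum>b<n. fls_nth (index_mat Am (r, b)) (- j) * (vec_index (c (i + j)) b)) = (if j = 0 then vec_index (c i) (r+1) else 0)" .
    qed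
    also have "\<dots> = vec_index (c i) (r+1)" using finJ zJ by simp
    finally show ?thesis using Fm True by simp
  next
    case False
    then have rn: "r = n - 1" using r by simp
    have "(\<Sum>j\<in>J. \<Sum>b<n. fls_nth (index_mat Am (r, b)) (- j) * (vec_index (c (i + j)) b)) = (\<Sum>j\<in>J. \<Sum>b<n. ca b (- j) * (vec_index (c (i + j)) b))"
    proof (rule sum.cong[OF refl], rule sum.cong[OF refl])
      fix j b assume "b \<in> {..<n}"
      then show "fls_nth (index_mat Am (r, b)) (- j) * vec_index (c (i + j)) b = ca b (- j) * vec_index (c (i + j)) b"
        using rn n by (simp add: A_entry ca_def)
    qed
    also have "\<dots> = (\<Sum>b<n. \<Sum>j\<in>J. ca b (- j) * (vec_index (c (i + j)) b))" by (rule sum.swap)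
    also have "\<dots> = (\<Sum>b<n. \<Sum>e\<in>E. ca b e * vec_index (c (i - e)) b)"
      unfolding E_def by (rule sum.cong[OF refl]) (simp add: sum.reindex inj_on_def)
    finally show ?thesis using Fm False by simp
  qed
qed

definition "Uc c k i = vec_index ((Fm ^^ k) c i) 0"

lemma comp: "r < n \<Longrightarrow> vec_index ((Fm ^^ k) c i) r = Uc c (k + r) i"
proof (induction r arbitrary: k)
  case 0 then show ?case by (simp add: Uc_def)
next
  case (Suc r)
  have "vec_index ((Fm ^^ (Suc k)) c i) r = vec_index (Fm ((Fm ^^ k) c) i) r" by simp
  also have "\<dots> = vec_index ((Fm ^^ k) c i) (Suc r)"
    using Suc.prems F_entry[of r "(Fm ^^ k) c" i] by simp
  finally have "vec_index ((Fm ^^ k) c i) (Suc r) = vec_index ((Fm ^^ (Suc k)) c i) r" by simp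
  also have "\<dots> = Uc c (Suc k + r) i" using Suc.IH[of "Suc k"] Suc.prems by linarith
  finally show ?case by simp
qed

lemma Uc_rec: "rec_ok n ca E (Uc c)"
  unfolding rec_ok_def
proof (intro allI)
  fix k i
  have "Uc c (k + n) i = Uc c (Suc k + (n - 1)) i" using n by simp
  also have "\<dots> = vec_index ((Fm ^^ Suc k) c i) (n - 1)" using comp[of "n-1" "Suc k" c i] n by simp
  also have "\<dots> = vec_index (Fm ((Fm ^^ k) c) i) (n - 1)" by simp
  also have "\<dots> = (\<Sum>b<n. \<Sum>e\<in>E. ca b e * vec_index ((Fm ^^ k) c (i - e)) b)" using n by (simp add: F_entry)
  also have "\<dots> = (\<Sum>b<n. \<Sum>e\<in>E. ca b e * Uc c (k + b) (i - e))"
    by (rule sum.cong[OF refl], rule sum.cong[OF refl]) (simp add: comp)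
  finally show "Uc c (k + n) i = (\<Sum>b<n. \<Sum>e\<in>E. ca b e * Uc c (k + b) (i - e))" .
qed

definition "cfg V l = (\<lambda>i. vec n (\<lambda>r. V (l + r) i))"

lemma cfg_configs: "cfg V l \<in> configs n" by (simp add: cfg_def configs_def)

lemma F_cfg:
  assumes "rec_ok n ca E V"
  shows "(Fm ^^ l) (cfg V 0) = cfg V l"
proof (induction l)
  case 0 then show ?case by simp
next
  case (Suc l)
  have "Fm (cfg V l) = cfg V (Suc l)"
  proof
    fix i
    show "Fm (cfg V l) i = cfg V (Suc l) i"
    proof (rule eq_vecI)
      show "dim_vec (Fm (cfg V l) i) = dim_vec (cfg V (Suc l) i)" by (simp add: Fm_def lin_CA_def cfg_def)
      fix r assume "r < dim_vec (cfg V (Suc l) i)"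
      then have r: "r < n" by (simp add: cfg_def)
      show "vec_index (Fm (cfg V l) i) r = vec_index (cfg V (Suc l) i) r"
      proof (cases "r < n - 1")
        case True then show ?thesis using r by (simp add: F_entry cfg_def) (metis add_Suc_right)
      next
        case False
        then have rn: "r = n - 1" using r by simp
        have "vec_index (Fm (cfg V l) i) r = (\<Sum>b<n. \<Sum>e\<in>E. ca b e * V (l + b) (i - e))"
          using r False by (simp add: F_entry cfg_def)
        also have "\<dots> = V (l + n) i" using assms by (simp add: rec_ok_def)
        also have "\<dots> = vec_index (cfg V (Suc l) i) r" using rn r n by (simp add: cfg_def)
        finally show ?thesis .
      qed
    qed
  qed
  then show ?case using Suc by simp
qed

lemma n0: "n > 0" using n by simp

lemma pe_if:
  assumes P: "exp_plus n ca m" and M: "exp_minus n ca L"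
  shows "pos_expansive n Fm"
proof -
  obtain R :: nat where R: "\<And>w. rec_ok n ca E w \<Longrightarrow> (\<forall>k i. \<bar>i\<bar> \<le> int R \<longrightarrow> w k i = 0) \<Longrightarrow> (\<forall>k i. w k i = 0)"
    using propagate[OF n0 finE _ P M] suppE by blast
  show ?thesis unfolding pos_expansive_def
  proof (rule exI[of _ "2 powr - real R"], intro conjI ballI impI)
    show "0 < (2::real) powr - real R" by simp
    fix c c' :: "int \<Rightarrow> 'a vec" assume c: "c \<in> configs n" and c': "c' \<in> configs n" and ne: "c \<noteq> c'"
    show "\<exists>l. 2 powr - real R \<le> cfg_dist ((Fm ^^ l) c) ((Fm ^^ l) c')"
    proof (rule ccontr)
      assume "\<not> ?thesis"
      then have small: "\<And>l. cfg_dist ((Fm ^^ l) c) ((Fm ^^ l) c') < 2 powr - real R" by (simp add: not_le)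
      define w where "w k i = Uc c k i - Uc c' k i" for k i
      have rw: "rec_ok n ca E w"
        using Uc_rec[of c] Uc_rec[of c'] unfolding rec_ok_def w_def
        by (simp add: sum_subtractf[symmetric] right_diff_distrib)
      have win: "\<forall>k i. \<bar>i\<bar> \<le> int R \<longrightarrow> w k i = 0"
      proof (intro allI impI)
        fix k i assume "\<bar>i\<bar> \<le> int R"
        then have "(Fm ^^ k) c i = (Fm ^^ k) c' i" using dist_small_eq[OF small] by blast
        then show "w k i = 0" by (simp add: w_def Uc_def)
      qed
      have w0: "\<And>k i. w k i = 0" using R[OF rw win] by blast
      have "c = c'"
      proof
        fix i
        show "c i = c' i"
        proof (rule eq_vecI)
          show "dim_vec (c i) = dim_vec (c' i)" using c c' by (simp add: configs_def)
          fix r assume "r < dim_vec (c' i)"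
          then have r: "r < n" using c' by (simp add: configs_def)
          have "vec_index (c i) r = Uc c r i" using comp[OF r, of 0 c i] by simp
          also have "\<dots> = Uc c' r i" using w0[of r i] by (simp add: w_def)
          also have "\<dots> = vec_index (c' i) r" using comp[OF r, of 0 c' i] by simp
          finally show "vec_index (c i) r = vec_index (c' i) r" .
        qed
      qed
      then show False using ne by simp
    qed
  qed
qed

lemma pow_half: "(2::real) powr - real (Suc N) \<le> (inverse 2) ^ N"
proof -
  have "(2::real) powr - real (Suc N) = inverse (2 powr real (Suc N))" by (rule powr_minus)
  also have "\<dots> = inverse (2 ^ Suc N)" by (simp only: powr_realpow)
  also have "\<dots> = (inverse 2) ^ Suc N" by (simp only: power_inverse)
  also have "\<dots> \<le> (inverse 2) ^ N" by (intro power_decreasing) auto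
  finally show ?thesis .
qed

lemma pe_onlyif:
  assumes pe: "pos_expansive n Fm"
  shows "(\<exists>m. exp_plus n ca m) \<and> (\<exists>L. exp_minus n ca L)"
proof (rule ccontr)
  assume nn: "\<not> ?thesis"
  obtain U and \<sigma> :: int where U: "U 0 0 \<noteq> 0" "rec_ok n ca E U" "\<sigma> = 1 \<or> \<sigma> = -1"
    "\<And>k i. \<sigma> * i < 0 \<Longrightarrow> U k i = 0"
  proof (cases "\<exists>L. exp_minus n ca L")
    case False
    then obtain U where "U 0 0 \<noteq> 0" "\<forall>k i. i < 0 \<longrightarrow> U k i = 0" "rec_ok n ca E U"
      using construct[OF n0 finE zE, of ca] suppE by blast
    then show ?thesis using that[of U 1] by auto
  next
    case True
    then have "\<not> (\<exists>m. exp_plus n ca m)" using nn by blast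
    then obtain U where "U 0 0 \<noteq> 0" "\<forall>k i. i > 0 \<longrightarrow> U k i = 0" "rec_ok n ca E U"
      using construct_plus[OF n0 finE zE, of ca] suppE by blast
    then show ?thesis using that[of U "-1"] by auto
  qed
  obtain \<epsilon> :: real where eps: "\<epsilon> > 0"
    and P: "\<And>c c'. c \<in> configs n \<Longrightarrow> c' \<in> configs n \<Longrightarrow> c \<noteq> c' \<Longrightarrow> \<exists>l. cfg_dist ((Fm ^^ l) c) ((Fm ^^ l) c') \<ge> \<epsilon>"
    using pe unfolding pos_expansive_def by blast
  obtain R where R: "(inverse 2::real) ^ R < \<epsilon>" using real_arch_pow_inv[OF eps, of "inverse 2"] by auto
  define s where "s = \<sigma> * (int R + 1)"
  define V where "V k i = U k (i - s)" for k i
  have rV: "rec_ok n ca E V" unfolding V_def by (rule rec_ok_shift[OF U(2)])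
  have Vwin: "V k i = 0" if "\<bar>i\<bar> \<le> int R" for k i
  proof -
    have "\<sigma> * (i - s) < 0" using U(3) that unfolding s_def by (auto simp: algebra_simps)
    then show ?thesis using U(4) by (simp add: V_def)
  qed
  define Z where "Z = (\<lambda>(k::nat) (i::int). 0::'a)"
  have rZ: "rec_ok n ca E Z" by (simp add: rec_ok_def Z_def)
  have ne: "cfg V 0 \<noteq> cfg Z 0"
  proof
    assume "cfg V 0 = cfg Z 0"
    then have "vec_index (cfg V 0 s) 0 = vec_index (cfg Z 0 s) 0" by simp
    then show False using U(1) n by (simp add: cfg_def V_def Z_def)
  qed
  obtain l where l: "cfg_dist ((Fm ^^ l) (cfg V 0)) ((Fm ^^ l) (cfg Z 0)) \<ge> \<epsilon>"
    using P[OF cfg_configs cfg_configs ne] by blast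
  have "cfg_dist ((Fm ^^ l) (cfg V 0)) ((Fm ^^ l) (cfg Z 0)) \<le> 2 powr - real (Suc R)"
    unfolding F_cfg[OF rV] F_cfg[OF rZ]
  proof (rule dist_le_of_eq)
    fix j :: int assume "\<bar>j\<bar> \<le> int R"
    then show "cfg V l j = cfg Z l j" using Vwin by (simp add: cfg_def Z_def)
  qed
  also have "\<dots> \<le> (inverse 2) ^ R" by (rule pow_half)
  finally show False using l R by linarith
qed

lemma pe_iff: "pos_expansive n Fm \<longleftrightarrow> (\<exists>m. exp_plus n ca m) \<and> (\<exists>L. exp_minus n ca L)"
  using pe_if pe_onlyif by blast

end


lemma is_lpoly_uminus: "is_lpoly (- f) = is_lpoly f"
  by (simp add: is_lpoly_def)

lemma coeff_Q: "Polynomial.coeff (Polynomial.monom 1 n - (\<Sum>i<n. Polynomial.monom (\<alpha> i) i)) k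
   = (if k = n then 1 else 0) - (if k < n then \<alpha> k else 0)"
  by (simp add: coeff_sum coeff_monom)

lemma coeff_P: "Polynomial.coeff ((\<Sum>i<n. Polynomial.monom (\<alpha> i) i) + Polynomial.monom 1 n) k
   = (if k < n then \<alpha> k else 0) + (if k = n then 1 else 0)"
  by (simp add: coeff_sum coeff_monom)

lemma degree_by_coeff: "Polynomial.coeff p n \<noteq> 0 \<Longrightarrow> (\<And>k. k > n \<Longrightarrow> Polynomial.coeff p k = 0) \<Longrightarrow> degree p = n"
  by (meson degree_le le_antisym le_degree)

theorem lemma10:
  fixes \<alpha> :: "nat \<Rightarrow> 'p::prime_card mod_ring fls" and n :: nat
  assumes "n > 1"
    and "\<forall>i<n. is_lpoly (\<alpha> i)"
  defines "A \<equiv> comp_like_mat n \<alpha>"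
  shows "(pos_expansive n (lin_CA n A) \<longleftrightarrow> expansive_mat A)
       \<and> (expansive_mat A \<longleftrightarrow> expansive_mat (transpose_mat A))
       \<and> (expansive_mat (transpose_mat A) \<longleftrightarrow>
            expansive_poly ((\<Sum>i<n. Polynomial.monom (\<alpha> i) i) + Polynomial.monom 1 n))"
proof -
  interpret CAsetup n \<alpha> using assms(1,2) by unfold_locales
  have n0: "n > 0" using assms(1) by simp
  define Q where "Q = Polynomial.monom 1 n - (\<Sum>i<n. Polynomial.monom (\<alpha> i) i)"
  define P where "P = (\<Sum>i<n. Polynomial.monom (\<alpha> i) i) + Polynomial.monom 1 n"
  have Acar: "A \<in> carrier_mat n n" unfolding A_def by (rule comp_like_carrier)
  have cp: "char_poly A = Q" unfolding A_def Q_def by (rule char_poly_comp_like[OF n0])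
  have tr: "char_poly (transpose_mat A) = char_poly A" by (rule char_poly_transpose_mat[OF Acar])
  define EPM where "EPM = ((\<exists>m. exp_plus n ca m) \<and> (\<exists>L. exp_minus n ca L))"
  have cQ: "\<And>k. Polynomial.coeff Q k = (if k = n then 1 else 0) - (if k < n then \<alpha> k else 0)"
    unfolding Q_def by (rule coeff_Q)
  have cP: "\<And>k. Polynomial.coeff P k = (if k < n then \<alpha> k else 0) + (if k = n then 1 else 0)"
    unfolding P_def by (rule coeff_P)
  have dQ: "degree Q = n" by (rule degree_by_coeff) (auto simp: cQ)
  have dP: "degree P = n" by (rule degree_by_coeff) (auto simp: cP)
  have eQ: "expansive_poly Q \<longleftrightarrow> EPM"
  proof -
    have "expansive_poly Q \<longleftrightarrow>
      (\<exists>m. exp_plus n (\<lambda>b e. fls_nth (Polynomial.coeff Q b) e) m) \<and>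
      (\<exists>L. exp_minus n (\<lambda>b e. fls_nth (Polynomial.coeff Q b) e) L)"
      by (rule poly_char[OF assms(1) dQ]) (use assms(2) in \<open>auto simp: cQ is_lpoly_uminus\<close>)
    also have "(\<lambda>m. exp_plus n (\<lambda>b e. fls_nth (Polynomial.coeff Q b) e) m) = exp_plus n ca"
      by (rule ext, rule exp_plus_cong[OF n0]) (simp add: cQ ca_def)
    also have "(\<lambda>m. exp_minus n (\<lambda>b e. fls_nth (Polynomial.coeff Q b) e) m) = exp_minus n ca"
      by (rule ext, rule exp_minus_cong[OF n0]) (simp add: cQ ca_def)
    finally show ?thesis by (simp add: EPM_def)
  qed
  have eP: "expansive_poly P \<longleftrightarrow> EPM"
  proof -
    have "expansive_poly P \<longleftrightarrow>
      (\<exists>m. exp_plus n (\<lambda>b e. fls_nth (Polynomial.coeff P b) e) m) \<and>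
      (\<exists>L. exp_minus n (\<lambda>b e. fls_nth (Polynomial.coeff P b) e) L)"
      by (rule poly_char[OF assms(1) dP]) (use assms(2) in \<open>auto simp: cP\<close>)
    also have "(\<lambda>m. exp_plus n (\<lambda>b e. fls_nth (Polynomial.coeff P b) e) m) = exp_plus n ca"
      by (rule ext, rule exp_plus_cong[OF n0]) (simp add: cP ca_def)
    also have "(\<lambda>m. exp_minus n (\<lambda>b e. fls_nth (Polynomial.coeff P b) e) m) = exp_minus n ca"
      by (rule ext, rule exp_minus_cong[OF n0]) (simp add: cP ca_def)
    finally show ?thesis by (simp add: EPM_def)
  qed
  have pe: "pos_expansive n (lin_CA n A) \<longleftrightarrow> EPM"
    unfolding EPM_def using pe_iff by (simp add: Fm_def Am_def A_def)
  show ?thesis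
    unfolding expansive_mat_def tr cp using eQ eP pe by (simp add: P_def)
qed

end
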